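(* Let $K$ be an oriented Legendrian knot and $(X,\ast,u,d)$ a finite GL-rack. Let $\Delta=\alpha_1\cdots\alpha_n$ be the disjoint cycle decomposition of its diagonal map (fixed points counted as $1$-cycles), $A_i=\operatorname{supp}(\alpha_i)$, and let $B_1,\dots,B_m$ be the sets obtained by taking, for each cycle length occurring, the union of all $A_i$ of that length, so that $X=\bigsqcup_j B_j$ and each $(B_j,\ast|_{B_j},u|_{B_j},d|_{B_j})$ is a GL-rack. Then $\operatorname{Col}_X(K)=\sum_{j=1}^m\operatorname{Col}_{B_j}(K)$.
   Context: A rack is a set $X$ with a binary operation $\ast$ such that for every $y\in X$ the map $x\mapsto x\ast y$ is a bijection of $X$ (inverse written $x\mapsto x\ast^{-1}y$) and $(x\ast y)\ast z=(x\ast z)\ast(y\ast z)$ for all $x,y,z$. A GL-rack is a quadruple $(X,\ast,u,d)$ where $(X,\ast)$ is a rack and $u,d\colon X\to X$ are maps such that for all $x,y\in X$: $u(d(x\ast x))=d(u(x\ast x))=x$; $u(x\ast y)=u(x)\ast y$ and $d(x\ast y)=d(x)\ast y$; $x\ast u(y)=x\ast d(y)=x\ast y$. Homomorphisms of GL-racks preserve $\ast,u,d$. The diagonal map is $\Delta(x)=x\ast x$; for a finite GL-rack it is a bijection and $\Delta=(u\circ d)^{-1}$. Legendrian knots lie in $(\mathbb{R}^3,\xi_{\mathrm{std}})$, $\xi_{\mathrm{std}}=\mathrm{span}\{\partial_y,\partial_x+y\partial_z\}$, and are represented by oriented front diagrams (projections to the $(x,z)$-plane) with crossings and cusps. Given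 a finite GL-rack $Y$ and a front diagram $D$ of $K$, a coloring is an assignment of elements of $Y$ to the semi-arcs of $D$ (segments bounded by undercrossings or cusps) such that, following the orientation through a cusp, the color changes from $x$ to $u(x)$ if the cusp is traversed upward and to $d(x)$ if traversed downward; and at each crossing whose over-strand is colored $y$, if the under semi-arc on the right of the oriented over-strand is colored $x$, the one on its left is colored $x\ast y$. The number $\operatorname{Col}_Y(K)$ of colorings is a Legendrian isotopy invariant, equal to $|\operatorname{Hom}(\operatorname{GLR}(K),Y)|$ where $\operatorname{GLR}(K)$ is the fundamental GL-rack of $K$ (generated by the arcs of $D$ subject to these relations). *)

theory Defs
  imports Main "HOL-Library.FuncSet"
begin

definition rack_on :: "'a set \<Rightarrow> ('a \<Rightarrow> 'a \<Rightarrow> 'a) \<Rightarrow> bool" where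
  "rack_on X op \<longleftrightarrow>
     (\<forall>x\<in>X. \<forall>y\<in>X. op x y \<in> X) \<and>
     (\<forall>y\<in>X. bij_betw (\<lambda>x. op x y) X X) \<and>
     (\<forall>x\<in>X. \<forall>y\<in>X. \<forall>z\<in>X. op (op x y) z = op (op x z) (op y z))"

definition gl_rack :: "'a set \<Rightarrow> ('a \<Rightarrow> 'a \<Rightarrow> 'a) \<Rightarrow> ('a \<Rightarrow> 'a) \<Rightarrow> ('a \<Rightarrow> 'a) \<Rightarrow> bool" where
  "gl_rack X op u d \<longleftrightarrow>
     rack_on X op \<and> u ` X \<subseteq> X \<and> d ` X \<subseteq> X \<and>
     (\<forall>x\<in>X. u (d (op x x)) = x \<and> d (u (op x x)) = x) \<and>
     (\<forall>x\<in>X. \<forall>y\<in>X. u (op x y) = op (u x) y \<and> d (op x y) = op (d x) y) \<and>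
     (\<forall>x\<in>X. \<forall>y\<in>X. op x (u y) = op x y \<and> op x (d y) = op x y)"

definition diag :: "('a \<Rightarrow> 'a \<Rightarrow> 'a) \<Rightarrow> 'a \<Rightarrow> 'a" where
  "diag op x = op x x"

definition cyc_len :: "('a \<Rightarrow> 'a \<Rightarrow> 'a) \<Rightarrow> 'a \<Rightarrow> nat" where
  "cyc_len op x = (LEAST n. n > 0 \<and> (diag op ^^ n) x = x)"

text \<open>The block B_k: union of the supports of all cycles of the diagonal map of length k.\<close>

definition cycle_block :: "'a set \<Rightarrow> ('a \<Rightarrow> 'a \<Rightarrow> 'a) \<Rightarrow> nat \<Rightarrow> 'a set" where
  "cycle_block X op k = {x \<in> X. cyc_len op x = k}"

text \<open>Semi-arcs are numbered 0..N-1 in the order met when travelling along the oriented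
knot. The transition from semi-arc i to semi-arc (i+1) mod N is an upward cusp, a downward
cusp, or passing under a crossing whose over-strand lies on semi-arc o. The boolean says
whether we pass from the right side (True) or from the left side (False) of the oriented
over-strand.\<close>

datatype transition = CuspUp | CuspDown | Under nat bool

datatype front = Front nat "nat \<Rightarrow> transition"

fun knot_diagram :: "front \<Rightarrow> bool" where
  "knot_diagram (Front N T) \<longleftrightarrow>
     N > 0 \<and> (\<forall>i<N. \<forall>ov s. T i = Under ov s \<longrightarrow> ov < N)"

fun coloring_rel :: "('a \<Rightarrow> 'a \<Rightarrow> 'a) \<Rightarrow> ('a \<Rightarrow> 'a) \<Rightarrow> ('a \<Rightarrow> 'a) \<Rightarrow> transition
    \<Rightarrow> 'a \<Rightarrow> 'a \<Rightarrow> (nat \<Rightarrow> 'a) \<Rightarrow> bool" where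
  "coloring_rel op u d CuspUp a b c \<longleftrightarrow> b = u a"
| "coloring_rel op u d CuspDown a b c \<longleftrightarrow> b = d a"
| "coloring_rel op u d (Under ov True) a b c \<longleftrightarrow> b = op a (c ov)"
| "coloring_rel op u d (Under ov False) a b c \<longleftrightarrow> a = op b (c ov)"

fun colorings :: "'a set \<Rightarrow> ('a \<Rightarrow> 'a \<Rightarrow> 'a) \<Rightarrow> ('a \<Rightarrow> 'a) \<Rightarrow> ('a \<Rightarrow> 'a) \<Rightarrow> front
    \<Rightarrow> (nat \<Rightarrow> 'a) set" where
  "colorings Y op u d (Front N T) =
     {c \<in> {0..<N} \<rightarrow>\<^sub>E Y. \<forall>i<N. coloring_rel op u d (T i) (c i) (c (Suc i mod N)) c}"

definition Col :: "'a set \<Rightarrow> ('a \<Rightarrow> 'a \<Rightarrow> 'a) \<Rightarrow> ('a \<Rightarrow> 'a) \<Rightarrow> ('a \<Rightarrow> 'a) \<Rightarrow> front \<Rightarrow> nat" where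
  "Col Y op u d D = card (colorings Y op u d D)"

end

theory Submission
  imports Defs
begin

context fixes X op u d assumes g: "gl_rack X op u d" begin
lemma gl_A1: "\<forall>x\<in>X. \<forall>y\<in>X. op x y \<in> X" using g unfolding gl_rack_def rack_on_def by (elim conjE) assumption
lemma gl_A2: "\<forall>y\<in>X. bij_betw (\<lambda>x. op x y) X X" using g unfolding gl_rack_def rack_on_def by (elim conjE) assumption
lemma gl_A3: "\<forall>x\<in>X. \<forall>y\<in>X. \<forall>z\<in>X. op (op x y) z = op (op x z) (op y z)" using g unfolding gl_rack_def rack_on_def by (elim conjE) assumption
lemma gl_A4: "u ` X \<subseteq> X" using g unfolding gl_rack_def rack_on_def by (elim conjE) assumption
lemma gl_A5: "d ` X \<subseteq> X" using g unfolding gl_rack_def rack_on_def by (elim conjE) assumption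
lemma gl_A6: "\<forall>x\<in>X. u (d (op x x)) = x \<and> d (u (op x x)) = x" using g unfolding gl_rack_def rack_on_def by (elim conjE) assumption
lemma gl_A7: "\<forall>x\<in>X. \<forall>y\<in>X. u (op x y) = op (u x) y \<and> d (op x y) = op (d x) y" using g unfolding gl_rack_def rack_on_def by (elim conjE) assumption
lemma gl_A8: "\<forall>x\<in>X. \<forall>y\<in>X. op x (u y) = op x y \<and> op x (d y) = op x y" using g unfolding gl_rack_def rack_on_def by (elim conjE) assumption
lemma gl_cl: "x \<in> X \<Longrightarrow> y \<in> X \<Longrightarrow> op x y \<in> X" using gl_A1 by blast
lemma gl_bij: "y \<in> X \<Longrightarrow> bij_betw (\<lambda>x. op x y) X X" using gl_A2 by blast
lemma gl_dist: "x \<in> X \<Longrightarrow> y \<in> X \<Longrightarrow> z \<in> X \<Longrightarrow> op (op x y) z = op (op x z) (op y z)" using gl_A3 by blast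
lemma gl_uX: "x \<in> X \<Longrightarrow> u x \<in> X" using gl_A4 by blast
lemma gl_dX: "x \<in> X \<Longrightarrow> d x \<in> X" using gl_A5 by blast
lemma gl_ud: "x \<in> X \<Longrightarrow> u (d (op x x)) = x" using gl_A6 by blast
lemma gl_du: "x \<in> X \<Longrightarrow> d (u (op x x)) = x" using gl_A6 by blast
lemma gl_uop: "x \<in> X \<Longrightarrow> y \<in> X \<Longrightarrow> u (op x y) = op (u x) y" using gl_A7 by blast
lemma gl_dop: "x \<in> X \<Longrightarrow> y \<in> X \<Longrightarrow> d (op x y) = op (d x) y" using gl_A7 by blast
lemma gl_opu: "x \<in> X \<Longrightarrow> y \<in> X \<Longrightarrow> op x (u y) = op x y" using gl_A8 by blast
lemma gl_opd: "x \<in> X \<Longrightarrow> y \<in> X \<Longrightarrow> op x (d y) = op x y" using gl_A8 by blast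
end

lemma diag_in: assumes g: "gl_rack X op u d" and x: "x \<in> X" shows "diag op x \<in> X"
  unfolding diag_def using gl_cl[OF g x x] .

lemma diagpow_in: assumes g: "gl_rack X op u d" and x: "x \<in> X" shows "(diag op ^^ n) x \<in> X"
proof (induction n)
  case 0 then show ?case using x by simp
next
  case (Suc n) then show ?case using diag_in[OF g, of "(diag op ^^ n) x"] by simp
qed

lemma diag_op1:
  assumes g: "gl_rack X op u d" and a: "a \<in> X" and y: "y \<in> X"
  shows "diag op (op a y) = op (diag op a) y"
  unfolding diag_def using gl_dist[OF g a a y] by simp

lemma diag_u1:
  assumes g: "gl_rack X op u d" and a: "a \<in> X"
  shows "diag op (u a) = u (diag op a)"
  unfolding diag_def using gl_opu[OF g gl_uX[OF g a] a] gl_uop[OF g a a] by simp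

lemma diag_d1:
  assumes g: "gl_rack X op u d" and a: "a \<in> X"
  shows "diag op (d a) = d (diag op a)"
  unfolding diag_def using gl_opd[OF g gl_dX[OF g a] a] gl_dop[OF g a a] by simp

lemma diagpow_op:
  assumes g: "gl_rack X op u d" and x: "x \<in> X" and y: "y \<in> X"
  shows "(diag op ^^ n) (op x y) = op ((diag op ^^ n) x) y"
proof (induction n)
  case 0 then show ?case by simp
next
  case (Suc n)
  have a: "(diag op ^^ n) x \<in> X" using diagpow_in[OF g x] .
  show ?case using Suc diag_op1[OF g a y] by simp
qed

lemma diagpow_u:
  assumes g: "gl_rack X op u d" and x: "x \<in> X"
  shows "(diag op ^^ n) (u x) = u ((diag op ^^ n) x)"
proof (induction n)
  case 0 then show ?case by simp
next
  case (Suc n)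
  have a: "(diag op ^^ n) x \<in> X" using diagpow_in[OF g x] .
  show ?case using Suc diag_u1[OF g a] by simp
qed

lemma diagpow_d:
  assumes g: "gl_rack X op u d" and x: "x \<in> X"
  shows "(diag op ^^ n) (d x) = d ((diag op ^^ n) x)"
proof (induction n)
  case 0 then show ?case by simp
next
  case (Suc n)
  have a: "(diag op ^^ n) x \<in> X" using diagpow_in[OF g x] .
  show ?case using Suc diag_d1[OF g a] by simp
qed

lemma diag_surj:
  assumes f: "finite X" and g: "gl_rack X op u d"
  shows "diag op ` X = X"
proof -
  have "inj_on (diag op) X"
  proof (rule inj_onI)
    fix a b assume a: "a \<in> X" and b: "b \<in> X" and e: "diag op a = diag op b"
    have "a = u (d (op a a))" using gl_ud[OF g a] by simp
    also have "\<dots> = u (d (op b b))" using e unfolding diag_def by simp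
    also have "\<dots> = b" using gl_ud[OF g b] by simp
    finally show "a = b" .
  qed
  moreover have "diag op ` X \<subseteq> X" using diag_in[OF g] by blast
  ultimately show ?thesis using f endo_inj_surj by blast
qed

lemma u_inj:
  assumes f: "finite X" and g: "gl_rack X op u d"
  shows "inj_on u X"
proof (rule inj_onI)
  fix a b assume a: "a \<in> X" and b: "b \<in> X" and e: "u a = u b"
  obtain a' where a': "a' \<in> X" "a = diag op a'" using a diag_surj[OF f g] by blast
  obtain b' where b': "b' \<in> X" "b = diag op b'" using b diag_surj[OF f g] by blast
  have "a' = d (u a)" using gl_du[OF g a'(1)] a'(2) unfolding diag_def by simp
  also have "\<dots> = d (u b)" using e by simp
  also have "\<dots> = b'" using gl_du[OF g b'(1)] b'(2) unfolding diag_def by simp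
  finally show "a = b" using a' b' by simp
qed

lemma d_inj:
  assumes f: "finite X" and g: "gl_rack X op u d"
  shows "inj_on d X"
proof (rule inj_onI)
  fix a b assume a: "a \<in> X" and b: "b \<in> X" and e: "d a = d b"
  obtain a' where a': "a' \<in> X" "a = diag op a'" using a diag_surj[OF f g] by blast
  obtain b' where b': "b' \<in> X" "b = diag op b'" using b diag_surj[OF f g] by blast
  have "a' = u (d a)" using gl_ud[OF g a'(1)] a'(2) unfolding diag_def by simp
  also have "\<dots> = u (d b)" using e by simp
  also have "\<dots> = b'" using gl_ud[OF g b'(1)] b'(2) unfolding diag_def by simp
  finally show "a = b" using a' b' by simp
qed

lemma cyc_len_eq:
  assumes "\<And>n. (diag op ^^ n) y = y \<longleftrightarrow> (diag op ^^ n) x = x"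
  shows "cyc_len op y = cyc_len op x"
  unfolding cyc_len_def using assms by simp

lemma cyc_op:
  assumes g: "gl_rack X op u d" and x: "x \<in> X" and y: "y \<in> X"
  shows "cyc_len op (op x y) = cyc_len op x"
proof (rule cyc_len_eq)
  fix n
  have i: "inj_on (\<lambda>x. op x y) X" using gl_bij[OF g y] unfolding bij_betw_def by blast
  show "(diag op ^^ n) (op x y) = op x y \<longleftrightarrow> (diag op ^^ n) x = x"
    using diagpow_op[OF g x y] inj_onD[OF i _ diagpow_in[OF g x, of n] x] by auto
qed

lemma cyc_u:
  assumes f: "finite X" and g: "gl_rack X op u d" and x: "x \<in> X"
  shows "cyc_len op (u x) = cyc_len op x"
proof (rule cyc_len_eq)
  fix n
  show "(diag op ^^ n) (u x) = u x \<longleftrightarrow> (diag op ^^ n) x = x"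
    using diagpow_u[OF g x] inj_onD[OF u_inj[OF f g] _ diagpow_in[OF g x, of n] x] by auto
qed

lemma cyc_d:
  assumes f: "finite X" and g: "gl_rack X op u d" and x: "x \<in> X"
  shows "cyc_len op (d x) = cyc_len op x"
proof (rule cyc_len_eq)
  fix n
  show "(diag op ^^ n) (d x) = d x \<longleftrightarrow> (diag op ^^ n) x = x"
    using diagpow_d[OF g x] inj_onD[OF d_inj[OF f g] _ diagpow_in[OF g x, of n] x] by auto
qed

lemma block_gl:
  assumes f: "finite X" and g: "gl_rack X op u d"
  shows "gl_rack (cycle_block X op k) op u d"
proof -
  let ?B = "cycle_block X op k"
  have mem: "z \<in> ?B \<longleftrightarrow> z \<in> X \<and> cyc_len op z = k" for z unfolding cycle_block_def by simp
  have sub: "?B \<subseteq> X" unfolding cycle_block_def by auto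
  have cl: "op x y \<in> ?B" if "x \<in> ?B" "y \<in> ?B" for x y
  proof -
    have "x \<in> X" "y \<in> X" "cyc_len op x = k" using that mem by auto
    then show ?thesis using gl_cl[OF g] cyc_op[OF g] mem by metis
  qed
  have bij: "bij_betw (\<lambda>x. op x y) ?B ?B" if y: "y \<in> ?B" for y
  proof -
    have yX: "y \<in> X" using y sub by auto
    have b: "bij_betw (\<lambda>x. op x y) X X" using gl_bij[OF g yX] .
    have i: "inj_on (\<lambda>x. op x y) ?B" using b sub unfolding bij_betw_def by (meson inj_on_subset)
    have s1: "(\<lambda>x. op x y) ` ?B \<subseteq> ?B" using cl y by blast
    have s2: "?B \<subseteq> (\<lambda>x. op x y) ` ?B"
    proof
      fix z assume z: "z \<in> ?B"
      then have "z \<in> X" using sub by auto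
      then obtain x where x: "x \<in> X" "z = op x y" using b unfolding bij_betw_def by blast
      have "cyc_len op z = k" using z mem by auto
      then have "cyc_len op x = k" using x cyc_op[OF g x(1) yX] by simp
      then have "x \<in> ?B" using x(1) mem by blast
      then show "z \<in> (\<lambda>x. op x y) ` ?B" using x(2) by blast
    qed
    show ?thesis unfolding bij_betw_def using i s1 s2 by blast
  qed
  have dist: "op (op x y) z = op (op x z) (op y z)" if "x \<in> ?B" "y \<in> ?B" "z \<in> ?B" for x y z
    using that sub gl_dist[OF g] by blast
  have r: "rack_on ?B op"
    unfolding rack_on_def using cl bij dist by blast
  have uB: "u x \<in> ?B" if "x \<in> ?B" for x
  proof -
    have "x \<in> X" "cyc_len op x = k" using that mem by auto
    then show ?thesis using gl_uX[OF g] cyc_u[OF f g] mem by metis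
  qed
  have dB: "d x \<in> ?B" if "x \<in> ?B" for x
  proof -
    have "x \<in> X" "cyc_len op x = k" using that mem by auto
    then show ?thesis using gl_dX[OF g] cyc_d[OF f g] mem by metis
  qed
  have e1: "\<forall>x\<in>?B. u (d (op x x)) = x \<and> d (u (op x x)) = x"
    using sub gl_ud[OF g] gl_du[OF g] by blast
  have e2: "\<forall>x\<in>?B. \<forall>y\<in>?B. u (op x y) = op (u x) y \<and> d (op x y) = op (d x) y"
    using sub gl_uop[OF g] gl_dop[OF g] by blast
  have e3: "\<forall>x\<in>?B. \<forall>y\<in>?B. op x (u y) = op x y \<and> op x (d y) = op x y"
    using sub gl_opu[OF g] gl_opd[OF g] by blast
  show ?thesis
    unfolding gl_rack_def using r uB dB e1 e2 e3 by blast
qed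

lemma col_const:
  assumes f: "finite X" and g: "gl_rack X op u d" and kd: "knot_diagram (Front N T)"
    and c: "c \<in> colorings X op u d (Front N T)"
  shows "\<forall>i<N. cyc_len op (c i) = cyc_len op (c 0)"
proof -
  have cX: "\<And>i. i < N \<Longrightarrow> c i \<in> X" using c by auto
  have step: "cyc_len op (c (Suc i)) = cyc_len op (c i)" if i: "Suc i < N" for i
  proof -
    have r0: "\<forall>j<N. coloring_rel op u d (T j) (c j) (c (Suc j mod N)) c" using c by simp
    have r: "coloring_rel op u d (T i) (c i) (c (Suc i mod N)) c" using r0 i by (metis Suc_lessD)
    have sm: "Suc i mod N = Suc i" using i by simp
    have ci: "c i \<in> X" and cs: "c (Suc i) \<in> X" using cX i by auto
    show ?thesis
    proof (cases "T i")
      case CuspUp then show ?thesis using r sm cyc_u[OF f g ci] by simp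
    next
      case CuspDown then show ?thesis using r sm cyc_d[OF f g ci] by simp
    next
      case (Under ov s)
      have "ov < N" using kd Under i by (simp, meson Suc_lessD)
      hence cov: "c ov \<in> X" using cX by auto
      show ?thesis
      proof (cases s)
        case True then show ?thesis using r sm Under cyc_op[OF g ci cov] by simp
      next
        case False then show ?thesis using r sm Under cyc_op[OF g cs cov] by simp
      qed
    qed
  qed
  have "i < N \<longrightarrow> cyc_len op (c i) = cyc_len op (c 0)" for i
    by (induction i) (use step in auto)
  then show ?thesis by blast
qed

lemma col_block:
  "c \<in> colorings (cycle_block X op k) op u d (Front N T) \<longleftrightarrow>
   c \<in> colorings X op u d (Front N T) \<and> (\<forall>i<N. cyc_len op (c i) = k)"
  unfolding colorings.simps cycle_block_def PiE_iff by auto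

theorem theorem3p10:
  fixes X :: "'a set" and op :: "'a \<Rightarrow> 'a \<Rightarrow> 'a" and u d :: "'a \<Rightarrow> 'a" and D :: front
  assumes "finite X" and "gl_rack X op u d" and "knot_diagram D"
  shows "(\<forall>k \<in> cyc_len op ` X. gl_rack (cycle_block X op k) op u d)
       \<and> X = (\<Union>k \<in> cyc_len op ` X. cycle_block X op k)
       \<and> Col X op u d D = (\<Sum>k \<in> cyc_len op ` X. Col (cycle_block X op k) op u d D)"
proof (intro conjI)
  show "\<forall>k \<in> cyc_len op ` X. gl_rack (cycle_block X op k) op u d"
    using block_gl[OF assms(1,2)] by blast
  show "X = (\<Union>k \<in> cyc_len op ` X. cycle_block X op k)"
    unfolding cycle_block_def by blast
  obtain N T where D: "D = Front N T" by (cases D)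
  have N: "N > 0" using assms(3) D by simp
  let ?A = "colorings X op u d (Front N T)"
  let ?C = "\<lambda>k. colorings (cycle_block X op k) op u d (Front N T)"
  have eq: "?A = (\<Union>k \<in> cyc_len op ` X. ?C k)"
  proof
    show "?A \<subseteq> (\<Union>k \<in> cyc_len op ` X. ?C k)"
    proof
      fix c assume c: "c \<in> ?A"
      have cc: "\<forall>i<N. cyc_len op (c i) = cyc_len op (c 0)"
        using col_const[OF assms(1,2) assms(3)[unfolded D] c] .
      have c0: "c 0 \<in> X" using c N by (simp add: PiE_iff)
      have "c \<in> ?C (cyc_len op (c 0))"
        using c cc col_block by blast
      then show "c \<in> (\<Union>k \<in> cyc_len op ` X. ?C k)" using c0 by blast
    qed
    show "(\<Union>k \<in> cyc_len op ` X. ?C k) \<subseteq> ?A"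
      using col_block by blast
  qed
  have fin: "finite ?A"
  proof (rule finite_subset)
    show "?A \<subseteq> {0..<N} \<rightarrow>\<^sub>E X" by auto
    show "finite ({0..<N} \<rightarrow>\<^sub>E X)" using assms(1) by (simp add: finite_PiE)
  qed
  have finC: "\<forall>k \<in> cyc_len op ` X. finite (?C k)" using fin eq by (metis UN_upper finite_subset)
  have disj: "?C k1 \<inter> ?C k2 = {}" if "k1 \<noteq> k2" for k1 k2
  proof -
    have "c \<notin> ?C k1 \<or> c \<notin> ?C k2" for c
      using col_block[of c X op k1 u d N T] col_block[of c X op k2 u d N T] N that by auto
    then show ?thesis by blast
  qed
  have "card ?A = (\<Sum>k \<in> cyc_len op ` X. card (?C k))"
    unfolding eq
    by (rule card_UN_disjoint) (use assms(1) finC disj in auto)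
  then show "Col X op u d D = (\<Sum>k \<in> cyc_len op ` X. Col (cycle_block X op k) op u d D)"
    unfolding Col_def D .
qed

end
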